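(* On mixed graphs without directed cycles, the parameter $G\mapsto\mathrm{nd}(G)$ and the parameter $G\mapsto\mathrm{nd}(G^+)$ are incomparable (neither bounds the other), and likewise $G\mapsto\mathrm{cw}(G)$ and $G\mapsto\mathrm{cw}(G^+)$ are incomparable; here $\mathrm{nd}$ and $\mathrm{cw}$ denote neighborhood diversity and cliquewidth of the underlying undirected graph.
   Context: A mixed graph $G$ consists of a finite vertex set $V(G)$, a set $E(G)$ of undirected edges and a set $A(G)$ of directed arcs; it is simple and contains no directed cycle. The underlying undirected graph replaces every arc by an edge. The transitive closure $G^+$ is obtained by adding every arc $(u,v)$ such that $G$ has a directed path from $u$ to $v$, and removing any edge parallel to such an arc. For an undirected graph, $u,v$ have the same type if $N(u)\setminus\{v\}=N(v)\setminus\{u\}$ and neighborhood diversity is the number of types. A parameter $\alpha$ bounds $\beta$ if there is a computable $f$ with $\beta(G)\le f(\alpha(G))$ for all mixed graphs $G$ without directed cycles; two parameters are incomparable if neither bounds the other. *)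

theory Defs
  imports Main
begin

text \<open>A mixed graph on natural-number vertices: (vertex set, undirected edges, directed arcs).
  Undirected edges are two-element sets, arcs are ordered pairs.\<close>

type_synonym mgraph = "nat set \<times> nat set set \<times> (nat \<times> nat) set"

type_synonym ugraph = "nat set \<times> nat set set"

definition mixed_graph :: "mgraph \<Rightarrow> bool" where
  "mixed_graph G \<longleftrightarrow> (case G of (V, E, A) \<Rightarrow>
      finite V
    \<and> (\<forall>e\<in>E. \<exists>u v. u \<noteq> v \<and> u \<in> V \<and> v \<in> V \<and> e = {u, v})
    \<and> A \<subseteq> V \<times> V
    \<and> (\<forall>(u, v)\<in>A. u \<noteq> v \<and> {u, v} \<notin> E)
    \<and> acyclic A)"

definition underlying :: "mgraph \<Rightarrow> ugraph" where
  "underlying G = (case G of (V, E, A) \<Rightarrow> (V, E \<union> {{u, v} | u v. (u, v) \<in> A}))"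

definition tclosure :: "mgraph \<Rightarrow> mgraph" where
  "tclosure G = (case G of (V, E, A) \<Rightarrow>
      (V, E - {{u, v} | u v. (u, v) \<in> A\<^sup>+}, A\<^sup>+))"

definition nbhd :: "ugraph \<Rightarrow> nat \<Rightarrow> nat set" where
  "nbhd G u = {w. {u, w} \<in> snd G}"

definition same_type :: "ugraph \<Rightarrow> (nat \<times> nat) set" where
  "same_type G = {(u, v). u \<in> fst G \<and> v \<in> fst G \<and> nbhd G u - {v} = nbhd G v - {u}}"

definition nd :: "ugraph \<Rightarrow> nat" where
  "nd G = card (fst G // same_type G)"

datatype cwexp =
    CEmpty
  | CVert nat nat          (* create vertex v with label i *)
  | CUnion cwexp cwexp
  | CJoin nat nat cwexp    (* add all edges between labels i and j, i \<noteq> j *)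
  | CRelabel nat nat cwexp (* relabel i to j *)

fun cw_verts :: "cwexp \<Rightarrow> nat set" where
  "cw_verts CEmpty = {}"
| "cw_verts (CVert v i) = {v}"
| "cw_verts (CUnion e1 e2) = cw_verts e1 \<union> cw_verts e2"
| "cw_verts (CJoin i j e) = cw_verts e"
| "cw_verts (CRelabel i j e) = cw_verts e"

fun cw_lab :: "cwexp \<Rightarrow> nat \<Rightarrow> nat" where
  "cw_lab CEmpty = (\<lambda>_. 0)"
| "cw_lab (CVert v i) = (\<lambda>_. i)"
| "cw_lab (CUnion e1 e2) = (\<lambda>x. if x \<in> cw_verts e1 then cw_lab e1 x else cw_lab e2 x)"
| "cw_lab (CJoin i j e) = cw_lab e"
| "cw_lab (CRelabel i j e) = (\<lambda>x. if cw_lab e x = i then j else cw_lab e x)"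

fun cw_edges :: "cwexp \<Rightarrow> nat set set" where
  "cw_edges CEmpty = {}"
| "cw_edges (CVert v i) = {}"
| "cw_edges (CUnion e1 e2) = cw_edges e1 \<union> cw_edges e2"
| "cw_edges (CJoin i j e) = cw_edges e \<union>
     {{u, w} | u w. u \<in> cw_verts e \<and> w \<in> cw_verts e \<and> cw_lab e u = i \<and> cw_lab e w = j}"
| "cw_edges (CRelabel i j e) = cw_edges e"

fun cw_labels :: "cwexp \<Rightarrow> nat set" where
  "cw_labels CEmpty = {}"
| "cw_labels (CVert v i) = {i}"
| "cw_labels (CUnion e1 e2) = cw_labels e1 \<union> cw_labels e2"
| "cw_labels (CJoin i j e) = {i, j} \<union> cw_labels e"
| "cw_labels (CRelabel i j e) = {i, j} \<union> cw_labels e"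

fun cw_valid :: "cwexp \<Rightarrow> bool" where
  "cw_valid CEmpty = True"
| "cw_valid (CVert v i) = True"
| "cw_valid (CUnion e1 e2) = (cw_valid e1 \<and> cw_valid e2 \<and> cw_verts e1 \<inter> cw_verts e2 = {})"
| "cw_valid (CJoin i j e) = (i \<noteq> j \<and> cw_valid e)"
| "cw_valid (CRelabel i j e) = cw_valid e"

definition k_expression :: "nat \<Rightarrow> cwexp \<Rightarrow> bool" where
  "k_expression k e \<longleftrightarrow> cw_valid e \<and> cw_labels e \<subseteq> {..<k}"

definition cw :: "ugraph \<Rightarrow> nat" where
  "cw G = (LEAST k. \<exists>e. k_expression k e \<and> cw_verts e = fst G \<and> cw_edges e = snd G)"

definition bounds :: "(mgraph \<Rightarrow> nat) \<Rightarrow> (mgraph \<Rightarrow> nat) \<Rightarrow> bool" where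
  "bounds \<alpha> \<beta> \<longleftrightarrow> (\<exists>f :: nat \<Rightarrow> nat. \<forall>G. mixed_graph G \<longrightarrow> \<beta> G \<le> f (\<alpha> G))"

definition incomparable :: "(mgraph \<Rightarrow> nat) \<Rightarrow> (mgraph \<Rightarrow> nat) \<Rightarrow> bool" where
  "incomparable \<alpha> \<beta> \<longleftrightarrow> \<not> bounds \<alpha> \<beta> \<and> \<not> bounds \<beta> \<alpha>"

end

theory Submission
  imports Defs
begin


fun subs :: "cwexp \<Rightarrow> cwexp set" where
  "subs CEmpty = {CEmpty}"
| "subs (CVert v i) = {CVert v i}"
| "subs (CUnion a b) = insert (CUnion a b) (subs a \<union> subs b)"
| "subs (CJoin i j a) = insert (CJoin i j a) (subs a)"
| "subs (CRelabel i j a) = insert (CRelabel i j a) (subs a)"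

lemma finite_verts: "finite (cw_verts e)"
  by (induction e) auto

lemma edges_verts: "x \<in> cw_edges e \<Longrightarrow> x \<subseteq> cw_verts e"
  by (induction e arbitrary: x) auto

lemma lab_in_labels: "v \<in> cw_verts e \<Longrightarrow> cw_lab e v \<in> cw_labels e"
  by (induction e) auto

lemma subs_verts: "e' \<in> subs e \<Longrightarrow> cw_verts e' \<subseteq> cw_verts e"
  by (induction e) auto

lemma subs_labels: "e' \<in> subs e \<Longrightarrow> cw_labels e' \<subseteq> cw_labels e"
  by (induction e) auto

lemma ctx_lab:
  "cw_valid e \<Longrightarrow> e' \<in> subs e \<Longrightarrow> u \<in> cw_verts e' \<Longrightarrow> v \<in> cw_verts e'
   \<Longrightarrow> cw_lab e' u = cw_lab e' v \<Longrightarrow> cw_lab e u = cw_lab e v"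
proof (induction e)
  case (CUnion e1 e2)
  show ?case
  proof (cases "e' = CUnion e1 e2")
    case True then show ?thesis using CUnion by simp
  next
    case False
    then have "e' \<in> subs e1 \<or> e' \<in> subs e2" using CUnion by auto
    then show ?thesis
    proof
      assume a: "e' \<in> subs e1"
      then have "u \<in> cw_verts e1" "v \<in> cw_verts e1" using subs_verts CUnion by auto
      then show ?thesis using CUnion a by auto
    next
      assume a: "e' \<in> subs e2"
      then have "u \<in> cw_verts e2" "v \<in> cw_verts e2" using subs_verts CUnion by auto
      then have "u \<notin> cw_verts e1" "v \<notin> cw_verts e1" using CUnion by auto
      then show ?thesis using CUnion a \<open>u \<in> cw_verts e2\<close> \<open>v \<in> cw_verts e2\<close> by auto
    qed
  qed
qed auto

lemma ctx_edge:
  "cw_valid e \<Longrightarrow> e' \<in> subs e \<Longrightarrow> u \<in> cw_verts e' \<Longrightarrow> v \<in> cw_verts e'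
   \<Longrightarrow> cw_lab e' u = cw_lab e' v \<Longrightarrow> w \<in> cw_verts e \<Longrightarrow> w \<notin> cw_verts e'
   \<Longrightarrow> ({u, w} \<in> cw_edges e \<longleftrightarrow> {v, w} \<in> cw_edges e)"
proof (induction e)
  case (CUnion e1 e2)
  have ne: "e' \<noteq> CUnion e1 e2" using CUnion by auto
  then have "e' \<in> subs e1 \<or> e' \<in> subs e2" using CUnion by auto
  then show ?case
  proof
    assume a: "e' \<in> subs e1"
    then have uv: "u \<in> cw_verts e1" "v \<in> cw_verts e1" using subs_verts CUnion by auto
    then have nuv: "u \<notin> cw_verts e2" "v \<notin> cw_verts e2" using CUnion by auto
    show ?thesis
    proof (cases "w \<in> cw_verts e1")
      case True then show ?thesis using CUnion a edges_verts[of _ e2] nuv by auto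
    next
      case False then show ?thesis using edges_verts[of _ e1] edges_verts[of _ e2] nuv by auto
    qed
  next
    assume a: "e' \<in> subs e2"
    then have uv: "u \<in> cw_verts e2" "v \<in> cw_verts e2" using subs_verts CUnion by auto
    then have nuv: "u \<notin> cw_verts e1" "v \<notin> cw_verts e1" using CUnion by auto
    show ?thesis
    proof (cases "w \<in> cw_verts e2")
      case True then show ?thesis using CUnion a edges_verts[of _ e1] nuv by auto
    next
      case False then show ?thesis using edges_verts[of _ e1] edges_verts[of _ e2] nuv by auto
    qed
  qed
next
  case (CJoin i j e0)
  have ne: "e' \<noteq> CJoin i j e0" using CJoin by auto
  then have a: "e' \<in> subs e0" using CJoin by auto
  then have uv: "u \<in> cw_verts e0" "v \<in> cw_verts e0" using subs_verts CJoin by auto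
  have IH: "({u, w} \<in> cw_edges e0 \<longleftrightarrow> {v, w} \<in> cw_edges e0)" using CJoin a by auto
  have L: "cw_lab e0 u = cw_lab e0 v" using ctx_lab[of e0 e' u v] CJoin a by auto
  have wu: "w \<noteq> u" "w \<noteq> v" using CJoin uv by auto
  have "({u, w} \<in> {{x, y} |x y. x \<in> cw_verts e0 \<and> y \<in> cw_verts e0 \<and> cw_lab e0 x = i \<and> cw_lab e0 y = j})
     \<longleftrightarrow> ({v, w} \<in> {{x, y} |x y. x \<in> cw_verts e0 \<and> y \<in> cw_verts e0 \<and> cw_lab e0 x = i \<and> cw_lab e0 y = j})"
    using L wu uv CJoin(7) by (auto simp: doubleton_eq_iff) (blast+)
  then show ?case using IH by simp
next
  case (CRelabel i j e0)
  have ne: "e' \<noteq> CRelabel i j e0" using CRelabel by auto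
  then have a: "e' \<in> subs e0" using CRelabel by auto
  then show ?case using CRelabel by auto
qed auto



lemma find_sub:
  assumes "2 \<le> m" "m \<le> card (cw_verts e \<inter> T)"
  shows "\<exists>e'\<in>subs e. m \<le> card (cw_verts e' \<inter> T) \<and> card (cw_verts e' \<inter> T) \<le> 2*m - 2"
  using assms
proof (induction e)
  case CEmpty then show ?case by simp
next
  case (CVert v i)
  have "card (cw_verts (CVert v i) \<inter> T) \<le> 1"
    by (rule order_trans[OF card_mono[of "{v}"]]) auto
  then show ?case using CVert by simp
next
  case (CUnion e1 e2)
  show ?case
  proof (cases "m \<le> card (cw_verts e1 \<inter> T)")
    case True then show ?thesis using CUnion by auto
  next
    case F1: False
    show ?thesis
    proof (cases "m \<le> card (cw_verts e2 \<inter> T)")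
      case True then show ?thesis using CUnion by auto
    next
      case False
      have "card (cw_verts (CUnion e1 e2) \<inter> T) \<le> card (cw_verts e1 \<inter> T) + card (cw_verts e2 \<inter> T)"
        by (simp add: Int_Un_distrib2 card_Un_le)
      then show ?thesis using F1 False CUnion by force
    qed
  qed
qed auto

lemma cw_lower_gen:
  assumes ke: "k_expression k e" and ve: "cw_verts e = V" and ee: "cw_edges e = E"
    and inj: "inj_on g {..<K}" and gV: "g ` {..<K} \<subseteq> V"
    and ER: "\<forall>p<K. \<forall>q<K. ({g p, g q} \<in> E \<longleftrightarrow> R p q)"
    and D: "\<forall>p<K. \<forall>q<K. p \<noteq> q \<longrightarrow> 2*m \<le> card {w. w<K \<and> w\<noteq>p \<and> w\<noteq>q \<and> (R p w \<noteq> R q w)}"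
    and mK: "m \<le> K" and m2: "2 \<le> m"
  shows "m \<le> k"
proof -
  define T where "T = g ` {..<K}"
  have cT: "card T = K" using inj by (simp add: T_def card_image)
  have fT: "finite T" by (simp add: T_def)
  have "card (cw_verts e \<inter> T) = K" using gV ve cT by (simp add: T_def Int_absorb1)
  then obtain e' where e': "e' \<in> subs e" "m \<le> card (cw_verts e' \<inter> T)" "card (cw_verts e' \<inter> T) \<le> 2*m - 2"
    using find_sub[OF m2, of e T] mK by auto
  define S where "S = cw_verts e' \<inter> T"
  have valid: "cw_valid e" using ke by (simp add: k_expression_def)
  have injS: "inj_on (cw_lab e') S"
  proof (rule inj_onI, rule ccontr)
    fix u v assume u: "u \<in> S" and v: "v \<in> S" and l: "cw_lab e' u = cw_lab e' v" and nuv: "u \<noteq> v"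
    obtain p where p: "p < K" "u = g p" using u by (auto simp: S_def T_def)
    obtain q where q: "q < K" "v = g q" using v by (auto simp: S_def T_def)
    have pq: "p \<noteq> q" using p q nuv by auto
    define Dw where "Dw = {w. w<K \<and> w\<noteq>p \<and> w\<noteq>q \<and> (R p w \<noteq> R q w)}"
    have cD: "2*m \<le> card Dw" using D p q pq by (simp add: Dw_def)
    have cgD: "card (g ` Dw) = card Dw"
      by (rule card_image, rule inj_on_subset[OF inj]) (auto simp: Dw_def)
    have sub: "g ` Dw \<inter> cw_verts e' \<subseteq> S - {u, v}"
    proof
      fix x assume x: "x \<in> g ` Dw \<inter> cw_verts e'"
      then obtain w where w: "w \<in> Dw" "x = g w" by auto
      have "x \<noteq> u" using w p inj by (auto simp: Dw_def inj_on_def)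
      moreover have "x \<noteq> v" using w q inj by (auto simp: Dw_def inj_on_def)
      moreover have "x \<in> T" using w by (auto simp: Dw_def T_def)
      ultimately show "x \<in> S - {u, v}" using x by (auto simp: S_def)
    qed
    have fS: "finite S" using fT by (simp add: S_def)
    have "card (S - {u, v}) = card S - 2" using u v nuv fS by (simp add: card_Diff_subset)
    also have "\<dots> \<le> 2*m - 4" using e' by (simp add: S_def)
    finally have "card (g ` Dw \<inter> cw_verts e') \<le> 2*m - 4"
      using card_mono[OF _ sub] fS by force
    then have "g ` Dw \<inter> cw_verts e' \<noteq> g ` Dw" using cD cgD m2 by auto
    then obtain w where w: "w \<in> Dw" "g w \<notin> cw_verts e'" by auto
    have wK: "w < K" using w by (simp add: Dw_def)
    have gwV: "g w \<in> cw_verts e" using gV ve wK by auto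
    have uv': "u \<in> cw_verts e'" "v \<in> cw_verts e'" using u v by (auto simp: S_def)
    have "({u, g w} \<in> cw_edges e \<longleftrightarrow> {v, g w} \<in> cw_edges e)"
      using ctx_edge[OF valid e'(1) uv' l gwV w(2)] .
    then have "R p w = R q w" using ER p q wK ee by auto
    then show False using w by (simp add: Dw_def)
  qed
  have "cw_lab e' ` S \<subseteq> {..<k}"
  proof
    fix x assume "x \<in> cw_lab e' ` S"
    then obtain u where "u \<in> S" "x = cw_lab e' u" by auto
    then have "x \<in> cw_labels e'" using lab_in_labels by (auto simp: S_def)
    then show "x \<in> {..<k}" using subs_labels[OF e'(1)] ke by (auto simp: k_expression_def)
  qed
  then have "card (cw_lab e' ` S) \<le> k" by (metis card_lessThan card_mono finite_lessThan)
  then have "card S \<le> k" using injS by (simp add: card_image)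
  then show ?thesis using e' by (simp add: S_def)
qed



fun vbase :: "nat list \<Rightarrow> cwexp" where
  "vbase [] = CEmpty"
| "vbase (v # vs) = CUnion (CVert v v) (vbase vs)"

lemma vbase_props:
  "cw_verts (vbase xs) = set xs \<and> cw_edges (vbase xs) = {} \<and> cw_labels (vbase xs) = set xs
   \<and> (\<forall>x\<in>set xs. cw_lab (vbase xs) x = x) \<and> (distinct xs \<longrightarrow> cw_valid (vbase xs))"
  by (induction xs) auto

fun joins :: "(nat \<times> nat) list \<Rightarrow> cwexp \<Rightarrow> cwexp" where
  "joins [] e = e"
| "joins ((a, b) # ps) e = CJoin a b (joins ps e)"

lemma joins_vl: "cw_verts (joins ps e) = cw_verts e \<and> cw_lab (joins ps e) = cw_lab e"
  by (induction ps) auto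

lemma joins_labels: "cw_labels (joins ps e) \<subseteq> cw_labels e \<union> fst ` set ps \<union> snd ` set ps"
proof (induction ps)
  case (Cons p ps)
  obtain a b where p: "p = (a, b)" by force
  show ?case using Cons by (auto simp: p)
qed auto

lemma joins_valid: "cw_valid e \<Longrightarrow> (\<forall>(a,b)\<in>set ps. a \<noteq> b) \<Longrightarrow> cw_valid (joins ps e)"
  by (induction ps) auto

lemma joins_edges: "cw_edges (joins ps e) = cw_edges e \<union> {{x, y} |x y a b. (a,b) \<in> set ps \<and>
     x \<in> cw_verts e \<and> y \<in> cw_verts e \<and> cw_lab e x = a \<and> cw_lab e y = b}"
proof (induction ps)
  case (Cons p ps)
  obtain a b where p: "p = (a, b)" by force
  show ?case using Cons joins_vl[of ps e] by (auto simp: p)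
qed auto

lemmas joins_props = joins_vl joins_labels joins_valid joins_edges

lemma expr_exists:
  assumes fV: "finite V" and EV: "E \<subseteq> {{u, v} |u v. u \<noteq> v \<and> u \<in> V \<and> v \<in> V}"
  shows "\<exists>k e. k_expression k e \<and> cw_verts e = V \<and> cw_edges e = E"
proof -
  define xs where "xs = sorted_list_of_set V"
  have sx: "set xs = V" "distinct xs" using fV by (auto simp: xs_def)
  define P where "P = {(a, b). a \<noteq> b \<and> a \<in> V \<and> b \<in> V \<and> {a, b} \<in> E}"
  have "finite P" using fV by (intro finite_subset[of P "V \<times> V"]) (auto simp: P_def)
  then obtain ps where ps: "set ps = P" using finite_list by auto
  obtain k where k: "V \<subseteq> {..<k}" using fV by (metis Max_ge lessThan_iff less_Suc_eq_le subsetI)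
  define e where "e = joins ps (vbase xs)"
  have B: "cw_verts (vbase xs) = V" "cw_edges (vbase xs) = {}" "cw_labels (vbase xs) = V"
      "\<forall>x\<in>V. cw_lab (vbase xs) x = x" "cw_valid (vbase xs)"
    using vbase_props[of xs] sx by auto
  have "cw_valid e" unfolding e_def using joins_props[where ps=ps and e="vbase xs"] B ps by (auto simp: P_def)
  moreover have "cw_labels e \<subseteq> {..<k}"
  proof -
    have "cw_labels e \<subseteq> V \<union> fst ` P \<union> snd ` P"
      using joins_labels[of ps "vbase xs"] B ps by (simp add: e_def)
    moreover have "fst ` P \<subseteq> V" "snd ` P \<subseteq> V" by (auto simp: P_def)
    ultimately show ?thesis using k by blast
  qed
  moreover have "cw_verts e = V" unfolding e_def using joins_props[where ps=ps and e="vbase xs"] B by auto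
  moreover have "cw_edges e = E"
  proof -
    have "cw_edges e = {{x, y} |x y a b. (a,b) \<in> set ps \<and>
     x \<in> V \<and> y \<in> V \<and> cw_lab (vbase xs) x = a \<and> cw_lab (vbase xs) y = b}"
      unfolding e_def using joins_edges[of ps "vbase xs"] B by simp
    also have "\<dots> = {{x, y} |x y. (x,y) \<in> P}"
    proof (intro equalityI subsetI)
      fix z assume "z \<in> {{x, y} |x y a b. (a,b) \<in> set ps \<and>
        x \<in> V \<and> y \<in> V \<and> cw_lab (vbase xs) x = a \<and> cw_lab (vbase xs) y = b}"
      then obtain x y a b where "z = {x,y}" "(a,b) \<in> set ps" "x \<in> V" "y \<in> V"
        "cw_lab (vbase xs) x = a" "cw_lab (vbase xs) y = b" by blast
      then show "z \<in> {{x, y} |x y. (x,y) \<in> P}" using B(4) ps by auto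
    next
      fix z assume "z \<in> {{x, y} |x y. (x,y) \<in> P}"
      then obtain x y where "z = {x,y}" "(x,y) \<in> P" by blast
      then show "z \<in> {{x, y} |x y a b. (a,b) \<in> set ps \<and>
        x \<in> V \<and> y \<in> V \<and> cw_lab (vbase xs) x = a \<and> cw_lab (vbase xs) y = b}"
      proof -
        have xy: "(x,y) \<in> set ps" "x \<in> V" "y \<in> V" using ps \<open>(x,y) \<in> P\<close> by (auto simp: P_def)
        then have "cw_lab (vbase xs) x = x" "cw_lab (vbase xs) y = y" using B(4) by auto
        then show ?thesis using xy \<open>z = {x,y}\<close> by blast
      qed
    qed
    also have "\<dots> = E" using EV by (auto simp: P_def) blast
    finally show ?thesis .
  qed
  ultimately show ?thesis by (auto simp: k_expression_def)
qed

lemma cw_le: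
  assumes "k_expression k e" "cw_verts e = fst G" "cw_edges e = snd G"
  shows "cw G \<le> k"
  unfolding cw_def by (rule Least_le) (use assms in auto)

lemma cw_ge:
  assumes "\<exists>k e. k_expression k e \<and> cw_verts e = fst G \<and> cw_edges e = snd G"
    and "\<And>k e. k_expression k e \<Longrightarrow> cw_verts e = fst G \<Longrightarrow> cw_edges e = snd G \<Longrightarrow> m \<le> k"
  shows "m \<le> cw G"
  unfolding cw_def by (rule LeastI2_ex) (use assms in auto)

fun clq :: "nat list \<Rightarrow> cwexp" where
  "clq [] = CEmpty"
| "clq (v # vs) = CRelabel 1 0 (CJoin 0 1 (CUnion (CVert v 1) (clq vs)))"

lemma clq_lab: "cw_lab (clq xs) = (\<lambda>_. 0)"
  by (induction xs) (auto simp: fun_eq_iff)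

lemma clq_props:
  "distinct xs \<Longrightarrow> cw_verts (clq xs) = set xs \<and> cw_labels (clq xs) \<subseteq> {0, 1} \<and> cw_valid (clq xs)
    \<and> cw_edges (clq xs) = {{a, b} |a b. a \<in> set xs \<and> b \<in> set xs \<and> a \<noteq> b}"
proof (induction xs)
  case (Cons v vs)
  have "cw_edges (clq (v # vs)) = cw_edges (clq vs) \<union> {{x, y} |x y. x \<in> insert v (set vs) \<and> y \<in> insert v (set vs)
      \<and> (if x = v then 1 else 0) = (0::nat) \<and> (if y = v then 1 else 0) = (1::nat)}"
    using Cons by (simp add: clq_lab)
  also have "\<dots> = {{a, b} |a b. a \<in> set (v#vs) \<and> b \<in> set (v#vs) \<and> a \<noteq> b}"
    using Cons by (auto split: if_splits)
  finally show ?case using Cons by (auto simp: clq_lab)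
qed auto

lemma cw_complete:
  assumes "finite V"
  shows "cw (V, {{a, b} |a b. a \<in> V \<and> b \<in> V \<and> a \<noteq> b}) \<le> 2"
proof -
  define xs where "xs = sorted_list_of_set V"
  have sx: "set xs = V" "distinct xs" using assms by (auto simp: xs_def)
  show ?thesis
    by (rule cw_le[of 2 "clq xs"]) (use clq_props[OF sx(2)] sx in \<open>auto simp: k_expression_def\<close>)
qed

fun mkl :: "nat list \<Rightarrow> nat \<Rightarrow> cwexp" where
  "mkl [] l = CEmpty"
| "mkl (v # vs) l = CUnion (CVert v l) (mkl vs l)"

lemma mkl_props:
  "cw_verts (mkl xs l) = set xs \<and> cw_edges (mkl xs l) = {} \<and> cw_labels (mkl xs l) \<subseteq> {l}
   \<and> (\<forall>x\<in>set xs. cw_lab (mkl xs l) x = l) \<and> (distinct xs \<longrightarrow> cw_valid (mkl xs l))"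
  by (induction xs) auto

lemma cw_bip:
  assumes "finite P" "finite Q" "P \<inter> Q = {}"
  shows "cw (P \<union> Q, {{a, b} |a b. a \<in> P \<and> b \<in> Q}) \<le> 2"
proof -
  define xs where "xs = sorted_list_of_set P"
  define ys where "ys = sorted_list_of_set Q"
  have sx: "set xs = P" "distinct xs" "set ys = Q" "distinct ys" using assms by (auto simp: xs_def ys_def)
  define e where "e = CJoin 0 1 (CUnion (mkl xs 0) (mkl ys 1))"
  have X: "cw_verts (mkl xs 0) = P" "cw_edges (mkl xs 0) = {}" "cw_labels (mkl xs 0) \<subseteq> {0}"
      "\<forall>x\<in>P. cw_lab (mkl xs 0) x = 0" "cw_valid (mkl xs 0)"
    using mkl_props[of xs 0] sx by auto
  have Y: "cw_verts (mkl ys 1) = Q" "cw_edges (mkl ys 1) = {}" "cw_labels (mkl ys 1) \<subseteq> {1}"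
      "\<forall>x\<in>Q. cw_lab (mkl ys 1) x = 1" "cw_valid (mkl ys 1)"
    using mkl_props[of ys 1] sx by auto
  have "k_expression 2 e" using X Y assms(3) by (auto simp: e_def k_expression_def)
  moreover have "cw_verts e = P \<union> Q" using X Y by (simp add: e_def)
  moreover have "cw_edges e = {{a, b} |a b. a \<in> P \<and> b \<in> Q}"
    using X Y assms(3) by (auto simp: e_def) (metis disjoint_iff zero_neq_one)+
  ultimately show ?thesis by (intro cw_le[of 2 e]) auto
qed



definition sd :: "nat \<Rightarrow> nat \<Rightarrow> nat" where "sd n p = p div (n*n)"
definition rw :: "nat \<Rightarrow> nat \<Rightarrow> nat" where "rw n p = p mod (n*n) div n"
definition cl :: "nat \<Rightarrow> nat \<Rightarrow> nat" where "cl n p = p mod n"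
definition enc :: "nat \<Rightarrow> nat \<Rightarrow> nat \<Rightarrow> nat \<Rightarrow> nat" where "enc n s i j = s*(n*n) + i*n + j"
definition adj :: "nat \<Rightarrow> nat \<Rightarrow> nat \<Rightarrow> bool" where
  "adj n p q \<longleftrightarrow> sd n p \<noteq> sd n q \<and> (rw n p = rw n q \<or> cl n p = cl n q)"

lemma ij_lt: "i < n \<Longrightarrow> j < n \<Longrightarrow> i*n + j < n*(n::nat)"
proof -
  assume a: "i < n" "j < n"
  have "i*n + j < i*n + n" using a by simp
  also have "\<dots> = (i+1)*n" by simp
  also have "\<dots> \<le> n*n" using a by (intro mult_right_mono) auto
  finally show ?thesis .
qed

lemma dec_enc:
  assumes "i < n" "j < n"
  shows "sd n (enc n s i j) = s" "rw n (enc n s i j) = i" "cl n (enc n s i j) = j"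
proof -
  have r: "i*n + j < n*n" using ij_lt assms .
  show "sd n (enc n s i j) = s" unfolding sd_def enc_def using r
    by (metis add.assoc add.commute div_mult_self1 div_less mult.commute mult_zero_left add_0 less_nat_zero_code)
  have "enc n s i j mod (n*n) = i*n + j" unfolding enc_def using r
    by (metis add.assoc mod_mult_self3 mod_less)
  then show "rw n (enc n s i j) = i" unfolding rw_def using assms by simp
  have "enc n s i j = j + (s*n + i)*n" unfolding enc_def by (simp add: algebra_simps)
  then show "cl n (enc n s i j) = j" unfolding cl_def using assms by simp
qed

lemma enc_dec:
  assumes "p < 2*n*n"
  shows "p = enc n (sd n p) (rw n p) (cl n p)" "sd n p < 2" "rw n p < n" "cl n p < n"
proof -
  have n: "n > 0" using assms by (cases n) auto
  have m1: "p = p div (n*n) * (n*n) + p mod (n*n)" by (rule div_mult_mod_eq[symmetric])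
  have m2: "p mod (n*n) = p mod (n*n) div n * n + p mod (n*n) mod n" by (rule div_mult_mod_eq[symmetric])
  have m3: "p mod (n*n) mod n = p mod n" by (simp add: mod_mod_cancel)
  show "p = enc n (sd n p) (rw n p) (cl n p)" unfolding enc_def sd_def rw_def cl_def
    using m1 m2 m3 by linarith
  show "sd n p < 2" unfolding sd_def using assms n by (simp add: div_less_iff_less_mult mult.assoc mult.commute)
  show "rw n p < n" unfolding rw_def using n
    by (metis div_less_iff_less_mult mod_less_divisor mult_pos_pos)
  show "cl n p < n" unfolding cl_def using n by simp
qed

lemma enc_lt: "s < 2 \<Longrightarrow> i < n \<Longrightarrow> j < n \<Longrightarrow> enc n s i j < 2*n*n"
proof -
  assume a: "s < 2" "i < n" "j < n"
  have "enc n s i j < s*(n*n) + n*n" unfolding enc_def using ij_lt[OF a(2,3)] by simp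
  also have "\<dots> = (s+1)*(n*n)" by simp
  also have "\<dots> \<le> 2*(n*n)" using a by (intro mult_right_mono) auto
  finally show ?thesis by simp
qed

lemma adj_sym: "adj n p q = adj n q p" by (auto simp: adj_def)
lemma adj_irrefl: "\<not> adj n p p" by (auto simp: adj_def)

lemma card_rm2: "n - 2 \<le> card ({..<n} - {x, y::nat})"
proof -
  have "card {..<n} - card {x,y} \<le> card ({..<n} - {x, y})" by (rule diff_card_le_card_Diff) auto
  moreover have "card {x,y} \<le> 2" by (simp add: card_insert_le_m1)
  ultimately show ?thesis by simp
qed

lemma card_rm1: "n - 2 \<le> card ({..<n} - {x::nat})"
  using card_rm2[of n x x] by simp

lemma core_dist:
  assumes p: "p < 2*n*n" and q: "q < 2*n*n" and pq: "p \<noteq> q"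
  shows "n - 2 \<le> card {w. w < 2*n*n \<and> w \<noteq> p \<and> w \<noteq> q \<and> (adj n p w \<noteq> adj n q w)}"
proof -
  define D where "D = {w. w < 2*n*n \<and> w \<noteq> p \<and> w \<noteq> q \<and> (adj n p w \<noteq> adj n q w)}"
  have fD: "finite D" by (auto simp: D_def)
  note P = enc_dec[OF p] and Q = enc_dec[OF q]
  have key: "\<And>f A. inj_on f A \<Longrightarrow> f ` A \<subseteq> D \<Longrightarrow> card A \<le> card D"
    using fD by (metis card_image card_mono)
  have "n - 2 \<le> card D"
  proof (cases "sd n p = sd n q")
    case sdeq: True
    show ?thesis
    proof (cases "rw n p = rw n q")
      case rweq: True
      then have cne: "cl n p \<noteq> cl n q" using sdeq pq P(1) Q(1) by metis
      define f where "f a = enc n (1 - sd n p) a (cl n p)" for a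
      have "inj_on f ({..<n} - {rw n p})"
        by (rule inj_onI) (metis f_def dec_enc(2) Diff_iff lessThan_iff P(4))
      moreover have "f ` ({..<n} - {rw n p}) \<subseteq> D"
      proof
        fix w assume "w \<in> f ` ({..<n} - {rw n p})"
        then obtain a where a: "a < n" "a \<noteq> rw n p" "w = f a" by auto
        have d: "sd n w = 1 - sd n p" "rw n w = a" "cl n w = cl n p"
          using dec_enc[OF a(1) P(4)] a(3) by (auto simp: f_def)
        have "w < 2*n*n" using a(3) enc_lt[OF _ a(1) P(4)] by (simp add: f_def)
        moreover have "sd n w \<noteq> sd n p" using d P(2) by arith
        ultimately show "w \<in> D" using d sdeq rweq cne a by (auto simp: D_def adj_def)
      qed
      ultimately have "card ({..<n} - {rw n p}) \<le> card D" by (rule key)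
      then show ?thesis using card_rm1[of n "rw n p"] by simp
    next
      case rwne: False
      define f where "f a = enc n (1 - sd n p) (rw n p) a" for a
      have "inj_on f ({..<n} - {cl n p, cl n q})"
        by (rule inj_onI) (metis f_def dec_enc(3) Diff_iff lessThan_iff P(3))
      moreover have "f ` ({..<n} - {cl n p, cl n q}) \<subseteq> D"
      proof
        fix w assume "w \<in> f ` ({..<n} - {cl n p, cl n q})"
        then obtain a where a: "a < n" "a \<noteq> cl n p" "a \<noteq> cl n q" "w = f a" by auto
        have d: "sd n w = 1 - sd n p" "rw n w = rw n p" "cl n w = a"
          using dec_enc[OF P(3) a(1)] a(4) by (auto simp: f_def)
        have "w < 2*n*n" using a(4) enc_lt[OF _ P(3) a(1)] by (simp add: f_def)
        moreover have "sd n w \<noteq> sd n p" using d P(2) by arith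
        ultimately show "w \<in> D" using d sdeq rwne a by (auto simp: D_def adj_def)
      qed
      ultimately have "card ({..<n} - {cl n p, cl n q}) \<le> card D" by (rule key)
      then show ?thesis using card_rm2[of n "cl n p" "cl n q"] by simp
    qed
  next
    case sdne: False
    define f where "f a = enc n (sd n q) (rw n p) a" for a
    have "inj_on f ({..<n} - {cl n q})"
      by (rule inj_onI) (metis f_def dec_enc(3) Diff_iff lessThan_iff P(3))
    moreover have "f ` ({..<n} - {cl n q}) \<subseteq> D"
    proof
      fix w assume "w \<in> f ` ({..<n} - {cl n q})"
      then obtain a where a: "a < n" "a \<noteq> cl n q" "w = f a" by auto
      have d: "sd n w = sd n q" "rw n w = rw n p" "cl n w = a"
        using dec_enc[OF P(3) a(1)] a(3) by (auto simp: f_def)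
      have "w < 2*n*n" using a(3) enc_lt[OF Q(2) P(3) a(1)] by (simp add: f_def)
      then show "w \<in> D" using d sdne a by (auto simp: D_def adj_def)
    qed
    ultimately have "card ({..<n} - {cl n q}) \<le> card D" by (rule key)
    then show ?thesis using card_rm1[of n "cl n q"] by simp
  qed
  then show ?thesis by (simp add: D_def)
qed



lemma nd_lower:
  assumes fV: "finite V" and inj: "inj_on g {..<K}" and gV: "g ` {..<K} \<subseteq> V"
    and ER: "\<forall>p<K. \<forall>q<K. ({g p, g q} \<in> E \<longleftrightarrow> R p q)"
    and D: "\<forall>p<K. \<forall>q<K. p \<noteq> q \<longrightarrow> (\<exists>w<K. w \<noteq> p \<and> w \<noteq> q \<and> (R p w \<noteq> R q w))"
  shows "K \<le> nd (V, E)"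
proof -
  define ST where "ST = same_type (V, E)"
  define h where "h p = ST `` {g p}" for p
  have refl: "x \<in> V \<Longrightarrow> (x, x) \<in> ST" for x by (simp add: ST_def same_type_def)
  have "inj_on h {..<K}"
  proof (rule inj_onI, rule ccontr)
    fix p q assume p: "p \<in> {..<K}" and q: "q \<in> {..<K}" and hpq: "h p = h q" and pq: "p \<noteq> q"
    have "g q \<in> h q" using refl gV q by (auto simp: h_def)
    then have "g q \<in> ST `` {g p}" using hpq by (simp add: h_def)
    then have "(g p, g q) \<in> ST" by simp
    then have eq: "nbhd (V, E) (g p) - {g q} = nbhd (V, E) (g q) - {g p}"
      by (simp add: ST_def same_type_def)
    obtain w where w: "w < K" "w \<noteq> p" "w \<noteq> q" "R p w \<noteq> R q w" using D p q pq by auto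
    have ne: "g w \<noteq> g p" "g w \<noteq> g q" using inj w p q by (auto simp: inj_on_def)
    have "(g w \<in> nbhd (V, E) (g p) - {g q}) = R p w" using ER w p ne by (auto simp: nbhd_def)
    moreover have "(g w \<in> nbhd (V, E) (g q) - {g p}) = R q w" using ER w q ne by (auto simp: nbhd_def)
    ultimately show False using eq w by simp
  qed
  moreover have "h ` {..<K} \<subseteq> V // ST" using gV by (auto simp: h_def intro!: quotientI)
  moreover have "finite (V // ST)" using fV by (auto simp: quotient_def)
  ultimately have "card {..<K} \<le> card (V // ST)" by (rule card_inj_on_le)
  then show ?thesis by (simp add: nd_def ST_def)
qed

lemma nd_complete:
  assumes "finite V"
  shows "nd (V, {{a, b} |a b. a \<in> V \<and> b \<in> V \<and> a \<noteq> b}) \<le> 1"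
proof -
  define G where "G = (V, {{a, b} |a b. a \<in> V \<and> b \<in> V \<and> a \<noteq> b})"
  have nb: "x \<in> V \<Longrightarrow> nbhd G x = V - {x}" for x
    by (auto simp: nbhd_def G_def doubleton_eq_iff)
  have "x \<in> V \<Longrightarrow> same_type G `` {x} = V" for x
    using nb by (auto simp: same_type_def G_def)
  then have "V // same_type G \<subseteq> {V}" by (auto simp: quotient_def G_def)
  then have "card (V // same_type G) \<le> card {V}" by (intro card_mono) auto
  then show ?thesis by (simp add: nd_def G_def)
qed

lemma nd_bip:
  assumes "finite P" "finite Q" "P \<inter> Q = {}" "2 \<le> card P" "2 \<le> card Q"
  shows "nd (P \<union> Q, {{a, b} |a b. a \<in> P \<and> b \<in> Q}) \<le> 2"
proof -
  define G where "G = (P \<union> Q, {{a, b} |a b. a \<in> P \<and> b \<in> Q})"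
  have nbP: "x \<in> P \<Longrightarrow> nbhd G x = Q" for x
    using assms(3) by (auto simp: nbhd_def G_def doubleton_eq_iff)
  have nbQ: "x \<in> Q \<Longrightarrow> nbhd G x = P" for x
    using assms(3) by (auto simp: nbhd_def G_def doubleton_eq_iff)
  have neP: "P - {x} \<noteq> {}" for x
  proof
    assume "P - {x} = {}"
    then have "P \<subseteq> {x}" by blast
    then have "card P \<le> card {x}" by (intro card_mono) auto
    then show False using assms(4) by simp
  qed
  have neQ: "Q - {x} \<noteq> {}" for x
  proof
    assume "Q - {x} = {}"
    then have "Q \<subseteq> {x}" by blast
    then have "card Q \<le> card {x}" by (intro card_mono) auto
    then show False using assms(5) by simp
  qed
  have cP: "x \<in> P \<Longrightarrow> same_type G `` {x} = P" for x
  proof -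
    assume x: "x \<in> P"
    have "y \<in> Q \<Longrightarrow> Q - {y} \<noteq> P - {x}" for y using neQ assms(3) by blast
    then show ?thesis using x nbP nbQ assms(3) by (auto simp: same_type_def G_def disjoint_iff)
  qed
  have cQ: "x \<in> Q \<Longrightarrow> same_type G `` {x} = Q" for x
  proof -
    assume x: "x \<in> Q"
    have "y \<in> P \<Longrightarrow> P - {y} \<noteq> Q - {x}" for y using neP assms(3) by blast
    then show ?thesis using x nbP nbQ assms(3) by (auto simp: same_type_def G_def disjoint_iff)
  qed
  have "(P \<union> Q) // same_type G \<subseteq> {P, Q}" using cP cQ by (auto simp: quotient_def)
  then have "card ((P \<union> Q) // same_type G) \<le> card {P, Q}" by (intro card_mono) auto
  also have "\<dots> \<le> 2" by (simp add: card_insert_le_m1)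
  finally show ?thesis by (simp add: nd_def G_def)
qed

lemma acyc_rank:
  assumes "\<forall>(a, b)\<in>A. f a < (f b :: nat)"
  shows "acyclic A"
proof -
  have "(a, b) \<in> A\<^sup>+ \<Longrightarrow> f a < f b" for a b
    by (induction rule: trancl_induct) (use assms in auto)
  then show ?thesis by (auto simp: acyclic_def)
qed

lemma underlying_tc:
  "underlying (tclosure (V, E, A)) = (V, E \<union> {{u, v} |u v. (u, v) \<in> A\<^sup>+})"
  by (auto simp: underlying_def tclosure_def)

lemma underlying_eq: "underlying (V, E, A) = (V, E \<union> {{u, v} |u v. (u, v) \<in> A})"
  by (simp add: underlying_def)

lemma mixed_expr:
  assumes "mixed_graph (V, E, A)"
  shows "\<exists>k e. k_expression k e \<and> cw_verts e = fst (underlying (V, E, A)) \<and> cw_edges e = snd (underlying (V, E, A))"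
    and "\<exists>k e. k_expression k e \<and> cw_verts e = fst (underlying (tclosure (V, E, A))) \<and> cw_edges e = snd (underlying (tclosure (V, E, A)))"
proof -
  have fV: "finite V" and EV: "\<forall>e\<in>E. \<exists>u v. u \<noteq> v \<and> u \<in> V \<and> v \<in> V \<and> e = {u, v}"
    and AV: "A \<subseteq> V \<times> V" and Ane: "\<forall>(u, v)\<in>A. u \<noteq> v" and ac: "acyclic A"
    using assms by (auto simp: mixed_graph_def)
  have A1: "E \<union> {{u, v} |u v. (u, v) \<in> A} \<subseteq> {{u, v} |u v. u \<noteq> v \<and> u \<in> V \<and> v \<in> V}"
  proof
    fix z assume "z \<in> E \<union> {{u, v} |u v. (u, v) \<in> A}"
    then show "z \<in> {{u, v} |u v. u \<noteq> v \<and> u \<in> V \<and> v \<in> V}"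
    proof
      assume "z \<in> E" then show ?thesis using EV by blast
    next
      assume "z \<in> {{u, v} |u v. (u, v) \<in> A}"
      then obtain u v where "z = {u, v}" "(u, v) \<in> A" by blast
      then show ?thesis using AV Ane by blast
    qed
  qed
  have AV': "A\<^sup>+ \<subseteq> V \<times> V" using AV by (rule trancl_subset_Sigma)
  have irr: "(u, u) \<notin> A\<^sup>+" for u using ac by (simp add: acyclic_def)
  have A2: "E \<union> {{u, v} |u v. (u, v) \<in> A\<^sup>+} \<subseteq> {{u, v} |u v. u \<noteq> v \<and> u \<in> V \<and> v \<in> V}"
  proof
    fix z assume "z \<in> E \<union> {{u, v} |u v. (u, v) \<in> A\<^sup>+}"
    then show "z \<in> {{u, v} |u v. u \<noteq> v \<and> u \<in> V \<and> v \<in> V}"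
    proof
      assume "z \<in> E" then show ?thesis using EV by blast
    next
      assume "z \<in> {{u, v} |u v. (u, v) \<in> A\<^sup>+}"
      then obtain u v where "z = {u, v}" "(u, v) \<in> A\<^sup>+" by blast
      moreover then have "u \<noteq> v" using irr by blast
      ultimately show ?thesis using AV' by blast
    qed
  qed
  show "\<exists>k e. k_expression k e \<and> cw_verts e = fst (underlying (V, E, A)) \<and> cw_edges e = snd (underlying (V, E, A))"
    using expr_exists[OF fV A1] by (simp add: underlying_eq)
  show "\<exists>k e. k_expression k e \<and> cw_verts e = fst (underlying (tclosure (V, E, A))) \<and> cw_edges e = snd (underlying (tclosure (V, E, A)))"
    using expr_exists[OF fV A2] by (simp add: underlying_tc)
qed



definition KK :: "nat \<Rightarrow> nat" where "KK n = 2*n*n"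

definition VA :: "nat \<Rightarrow> nat set" where "VA n = {..<2 * KK n - 1}"
definition EA :: "nat \<Rightarrow> nat set set" where
  "EA n = {{2*p, 2*q} |p q. p < KK n \<and> q < KK n \<and> adj n p q}"
definition AA :: "nat \<Rightarrow> (nat \<times> nat) set" where
  "AA n = {(v, Suc v) |v. Suc v < 2 * KK n - 1}"
definition GA :: "nat \<Rightarrow> mgraph" where "GA n = (VA n, EA n, AA n)"

lemma mixed_GA: "mixed_graph (GA n)"
proof -
  have E1: "\<forall>e\<in>EA n. \<exists>u v. u \<noteq> v \<and> u \<in> VA n \<and> v \<in> VA n \<and> e = {u, v}"
  proof
    fix e assume "e \<in> EA n"
    then obtain p q where pq: "e = {2*p, 2*q}" "p < KK n" "q < KK n" "adj n p q" by (auto simp: EA_def)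
    then have "p \<noteq> q" using adj_irrefl by metis
    then show "\<exists>u v. u \<noteq> v \<and> u \<in> VA n \<and> v \<in> VA n \<and> e = {u, v}"
      using pq by (intro exI[of _ "2*p"] exI[of _ "2*q"]) (auto simp: VA_def)
  qed
  have A1: "AA n \<subseteq> VA n \<times> VA n" by (auto simp: AA_def VA_def)
  have A2: "\<forall>(u, v)\<in>AA n. u \<noteq> v \<and> {u, v} \<notin> EA n"
  proof (clarify)
    fix u v assume "(u, v) \<in> AA n"
    then have v: "v = Suc u" by (auto simp: AA_def)
    show "u \<noteq> v \<and> {u, v} \<notin> EA n"
    proof
      show "u \<noteq> v" using v by simp
      show "{u, v} \<notin> EA n"
      proof
        assume "{u, v} \<in> EA n"
        then obtain p q where "{u, v} = {2*p, 2*q}" by (auto simp: EA_def)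
        then have "(u = 2*p \<and> v = 2*q) \<or> (u = 2*q \<and> v = 2*p)" by (auto simp: doubleton_eq_iff)
        then show False using v by presburger
      qed
    qed
  qed
  have A3: "acyclic (AA n)" by (rule acyc_rank[of _ id]) (auto simp: AA_def)
  show ?thesis unfolding mixed_graph_def GA_def using E1 A1 A2 A3 by (auto simp: VA_def)
qed

lemma AA_trancl: "(AA n)\<^sup>+ = {(u, v). u < v \<and> v < 2 * KK n - 1}"
proof (intro equalityI subsetI)
  fix x assume "x \<in> (AA n)\<^sup>+"
  then obtain a b where x: "x = (a, b)" "(a, b) \<in> (AA n)\<^sup>+" by (cases x) auto
  have "a < b \<and> b < 2 * KK n - 1" using x(2)
    by (induction rule: trancl_induct) (auto simp: AA_def)
  then show "x \<in> {(u, v). u < v \<and> v < 2 * KK n - 1}" using x by simp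
next
  fix x assume "x \<in> {(u, v). u < v \<and> v < 2 * KK n - 1}"
  then obtain a b where x: "x = (a, b)" "a < b" "b < 2 * KK n - 1" by auto
  have "\<forall>a. a < b \<longrightarrow> b < 2 * KK n - 1 \<longrightarrow> (a, b) \<in> (AA n)\<^sup>+"
  proof (induction b)
    case 0 then show ?case by simp
  next
    case (Suc b)
    show ?case
    proof (intro allI impI)
      fix a assume a: "a < Suc b" "Suc b < 2 * KK n - 1"
      have st: "(b, Suc b) \<in> AA n" using a by (auto simp: AA_def)
      show "(a, Suc b) \<in> (AA n)\<^sup>+"
      proof (cases "a = b")
        case True then show ?thesis using st by auto
      next
        case False
        then have "(a, b) \<in> (AA n)\<^sup>+" using Suc a by auto
        then show ?thesis using st by (rule trancl_into_trancl)
      qed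
    qed
  qed
  then show "x \<in> (AA n)\<^sup>+" using x by auto
qed

lemma GA_tc: "underlying (tclosure (GA n)) = (VA n, {{a, b} |a b. a \<in> VA n \<and> b \<in> VA n \<and> a \<noteq> b})"
proof -
  have "EA n \<union> {{u, v} |u v. (u, v) \<in> (AA n)\<^sup>+} = {{a, b} |a b. a \<in> VA n \<and> b \<in> VA n \<and> a \<noteq> b}"
  proof (intro equalityI subsetI)
    fix z assume "z \<in> EA n \<union> {{u, v} |u v. (u, v) \<in> (AA n)\<^sup>+}"
    then show "z \<in> {{a, b} |a b. a \<in> VA n \<and> b \<in> VA n \<and> a \<noteq> b}"
    proof
      assume "z \<in> EA n"
      moreover have "\<forall>e\<in>EA n. \<exists>u v. u \<noteq> v \<and> u \<in> VA n \<and> v \<in> VA n \<and> e = {u, v}"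
        using mixed_GA[of n] by (simp add: mixed_graph_def GA_def)
      ultimately show ?thesis by blast
    next
      assume "z \<in> {{u, v} |u v. (u, v) \<in> (AA n)\<^sup>+}"
      then obtain u v where "z = {u, v}" "u < v" "v < 2 * KK n - 1" unfolding AA_trancl by blast
      then show ?thesis unfolding VA_def by (intro CollectI exI[of _ u] exI[of _ v]) auto
    qed
  next
    fix z assume "z \<in> {{a, b} |a b. a \<in> VA n \<and> b \<in> VA n \<and> a \<noteq> b}"
    then obtain a b where z: "z = {a, b}" "a \<in> VA n" "b \<in> VA n" "a \<noteq> b" by blast
    show "z \<in> EA n \<union> {{u, v} |u v. (u, v) \<in> (AA n)\<^sup>+}"
    proof (cases "a < b")
      case True then show ?thesis using z unfolding AA_trancl by (auto simp: VA_def)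
    next
      case False then have "b < a" using z by simp
      then show ?thesis using z unfolding AA_trancl by (auto simp: VA_def insert_commute)
    qed
  qed
  then show ?thesis by (simp add: GA_def underlying_tc)
qed

lemma GA_T:
  assumes "p < KK n" "q < KK n"
  shows "{2*p, 2*q} \<in> snd (underlying (GA n)) \<longleftrightarrow> adj n p q"
proof
  assume "{2*p, 2*q} \<in> snd (underlying (GA n))"
  then have "{2*p, 2*q} \<in> EA n \<or> (\<exists>v. {2*p, 2*q} = {v, Suc v})"
    by (auto simp: GA_def underlying_eq AA_def)
  then show "adj n p q"
  proof
    assume "{2*p, 2*q} \<in> EA n"
    then obtain p' q' where "{2*p, 2*q} = {2*p', 2*q'}" "adj n p' q'" by (auto simp: EA_def)
    then show ?thesis by (auto simp: doubleton_eq_iff adj_sym)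
  next
    assume "\<exists>v. {2*p, 2*q} = {v, Suc v}"
    then obtain v where "{2*p, 2*q} = {v, Suc v}" by blast
    then have "(2*p = v \<and> 2*q = Suc v) \<or> (2*p = Suc v \<and> 2*q = v)" by (auto simp: doubleton_eq_iff)
    then have False by presburger
    then show ?thesis by simp
  qed
next
  assume "adj n p q"
  then show "{2*p, 2*q} \<in> snd (underlying (GA n))" using assms
    by (auto simp: GA_def underlying_eq EA_def)
qed



definition VB :: "nat \<Rightarrow> nat set" where "VB n = {..<KK n + 2*n}"
definition AB :: "nat \<Rightarrow> (nat \<times> nat) set" where
  "AB n = {(p, KK n + rw n p) |p. p < KK n \<and> sd n p = 0}
        \<union> {(KK n + rw n q, q) |q. q < KK n \<and> sd n q = 1}
        \<union> {(p, KK n + n + cl n p) |p. p < KK n \<and> sd n p = 0}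
        \<union> {(KK n + n + cl n q, q) |q. q < KK n \<and> sd n q = 1}"
definition EB :: "nat \<Rightarrow> nat set set" where
  "EB n = {{p, b} |p b. p < KK n \<and> KK n \<le> b \<and> b < KK n + 2*n \<and> (p, b) \<notin> AB n \<and> (b, p) \<notin> AB n}"
definition GB :: "nat \<Rightarrow> mgraph" where "GB n = (VB n, EB n, AB n)"

lemma dec_lt: "p < KK n \<Longrightarrow> sd n p < 2 \<and> rw n p < n \<and> cl n p < n"
  using enc_dec[of p n] by (simp add: KK_def)

lemma AB_cases:
  assumes "(x, y) \<in> AB n"
  shows "(x < KK n \<and> sd n x = 0 \<and> (y = KK n + rw n x \<or> y = KK n + n + cl n x))
       \<or> (y < KK n \<and> sd n y = 1 \<and> (x = KK n + rw n y \<or> x = KK n + n + cl n y))"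
  using assms by (auto simp: AB_def)

definition rkB :: "nat \<Rightarrow> nat \<Rightarrow> nat" where
  "rkB n v = (if v < KK n then (if sd n v = 0 then 0 else 2) else 1)"

lemma AB_rank: "(x, y) \<in> AB n \<Longrightarrow> rkB n x < rkB n y"
  using AB_cases[of x y n] by (auto simp: rkB_def)

lemma AB_sub: "AB n \<subseteq> VB n \<times> VB n"
proof
  fix z assume "z \<in> AB n"
  then obtain x y where z: "z = (x, y)" "(x, y) \<in> AB n" by (cases z) auto
  show "z \<in> VB n \<times> VB n" using AB_cases[OF z(2)] dec_lt[of x n] dec_lt[of y n] z(1)
    by (auto simp: VB_def)
qed

lemma mixed_GB: "mixed_graph (GB n)"
proof -
  have E1: "\<forall>e\<in>EB n. \<exists>u v. u \<noteq> v \<and> u \<in> VB n \<and> v \<in> VB n \<and> e = {u, v}"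
  proof
    fix e assume "e \<in> EB n"
    then obtain p b where pb: "e = {p, b}" "p < KK n" "KK n \<le> b" "b < KK n + 2*n" by (auto simp: EB_def)
    then show "\<exists>u v. u \<noteq> v \<and> u \<in> VB n \<and> v \<in> VB n \<and> e = {u, v}"
      by (intro exI[of _ p] exI[of _ b]) (auto simp: VB_def)
  qed
  have A2: "\<forall>(u, v)\<in>AB n. u \<noteq> v \<and> {u, v} \<notin> EB n"
  proof (clarify)
    fix u v assume uv: "(u, v) \<in> AB n"
    show "u \<noteq> v \<and> {u, v} \<notin> EB n"
    proof
      show "u \<noteq> v" using AB_rank[OF uv] by auto
      show "{u, v} \<notin> EB n"
      proof
        assume "{u, v} \<in> EB n"
        then obtain p b where "{u, v} = {p, b}" "(p, b) \<notin> AB n" "(b, p) \<notin> AB n" by (auto simp: EB_def)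
        then show False using uv by (auto simp: doubleton_eq_iff)
      qed
    qed
  qed
  have A3: "acyclic (AB n)" by (rule acyc_rank[of _ "rkB n"]) (auto dest: AB_rank)
  show ?thesis unfolding mixed_graph_def GB_def using E1 AB_sub A2 A3 by (auto simp: VB_def)
qed

lemma GB_u: "underlying (GB n) = ({..<KK n} \<union> {KK n..<KK n + 2*n}, {{a, b} |a b. a \<in> {..<KK n} \<and> b \<in> {KK n..<KK n + 2*n}})"
proof -
  have V: "VB n = {..<KK n} \<union> {KK n..<KK n + 2*n}" by (auto simp: VB_def)
  have "EB n \<union> {{u, v} |u v. (u, v) \<in> AB n} = {{a, b} |a b. a \<in> {..<KK n} \<and> b \<in> {KK n..<KK n + 2*n}}"
  proof (intro equalityI subsetI)
    fix z assume "z \<in> EB n \<union> {{u, v} |u v. (u, v) \<in> AB n}"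
    then show "z \<in> {{a, b} |a b. a \<in> {..<KK n} \<and> b \<in> {KK n..<KK n + 2*n}}"
    proof
      assume "z \<in> EB n" then show ?thesis by (auto simp: EB_def)
    next
      assume "z \<in> {{u, v} |u v. (u, v) \<in> AB n}"
      then obtain u v where uv: "z = {u, v}" "(u, v) \<in> AB n" by blast
      have "(u < KK n \<and> (v = KK n + rw n u \<or> v = KK n + n + cl n u))
          \<or> (v < KK n \<and> (u = KK n + rw n v \<or> u = KK n + n + cl n v))"
        using AB_cases[OF uv(2)] by auto
      then show ?thesis
      proof
        assume "u < KK n \<and> (v = KK n + rw n u \<or> v = KK n + n + cl n u)"
        then show ?thesis using dec_lt[of u n] uv(1)
          by (intro CollectI exI[of _ u] exI[of _ v]) auto
      next
        assume "v < KK n \<and> (u = KK n + rw n v \<or> u = KK n + n + cl n v)"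
        then show ?thesis using dec_lt[of v n] uv(1)
          by (intro CollectI exI[of _ v] exI[of _ u]) (auto simp: insert_commute)
      qed
    qed
  next
    fix z assume "z \<in> {{a, b} |a b. a \<in> {..<KK n} \<and> b \<in> {KK n..<KK n + 2*n}}"
    then obtain a b where z: "z = {a, b}" "a < KK n" "KK n \<le> b" "b < KK n + 2*n" by auto
    show "z \<in> EB n \<union> {{u, v} |u v. (u, v) \<in> AB n}"
    proof (cases "(a, b) \<in> AB n \<or> (b, a) \<in> AB n")
      case True then show ?thesis using z by (auto simp: insert_commute)
    next
      case False then show ?thesis using z by (auto simp: EB_def)
    qed
  qed
  then show ?thesis by (simp add: GB_def underlying_eq V)
qed

lemma AB_trancl:
  assumes "(x, y) \<in> (AB n)\<^sup>+"
  shows "(x, y) \<in> AB n \<or> (x, y) \<in> AB n O AB n"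
  using assms
proof (induction rule: trancl_induct)
  case (base y) then show ?case by simp
next
  case (step y z)
  show ?case using step(3)
  proof
    assume "(x, y) \<in> AB n" then show ?thesis using step(2) by auto
  next
    assume "(x, y) \<in> AB n O AB n"
    then obtain w where "(x, w) \<in> AB n" "(w, y) \<in> AB n" by auto
    then have "rkB n x < rkB n w" "rkB n w < rkB n y" "rkB n y < rkB n z"
      using AB_rank step(2) by auto
    moreover have "rkB n z \<le> 2" by (simp add: rkB_def)
    ultimately show ?thesis by simp
  qed
qed

lemma AB_TT:
  assumes p: "p < KK n" and q: "q < KK n"
  shows "(p, q) \<in> (AB n)\<^sup>+ \<longleftrightarrow> sd n p = 0 \<and> sd n q = 1 \<and> (rw n p = rw n q \<or> cl n p = cl n q)"
proof
  assume "(p, q) \<in> (AB n)\<^sup>+"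
  then have "(p, q) \<in> AB n \<or> (p, q) \<in> AB n O AB n" by (rule AB_trancl)
  moreover have "(p, q) \<notin> AB n" using AB_cases[of p q n] p q by auto
  ultimately obtain w where w: "(p, w) \<in> AB n" "(w, q) \<in> AB n" by auto
  show "sd n p = 0 \<and> sd n q = 1 \<and> (rw n p = rw n q \<or> cl n p = cl n q)"
    using AB_cases[OF w(1)] AB_cases[OF w(2)] p q dec_lt[OF p] dec_lt[OF q] by auto
next
  assume a: "sd n p = 0 \<and> sd n q = 1 \<and> (rw n p = rw n q \<or> cl n p = cl n q)"
  show "(p, q) \<in> (AB n)\<^sup>+"
  proof (cases "rw n p = rw n q")
    case True
    have "(p, KK n + rw n p) \<in> AB n" "(KK n + rw n p, q) \<in> AB n" using a p q True
      by (auto simp: AB_def)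
    then show ?thesis by (rule trancl_into_trancl[OF r_into_trancl])
  next
    case False
    then have c: "cl n p = cl n q" using a by simp
    have "(p, KK n + n + cl n p) \<in> AB n" "(KK n + n + cl n p, q) \<in> AB n" using a p q c
      by (auto simp: AB_def)
    then show ?thesis by (rule trancl_into_trancl[OF r_into_trancl])
  qed
qed

lemma GB_T:
  assumes p: "p < KK n" and q: "q < KK n"
  shows "{p, q} \<in> snd (underlying (tclosure (GB n))) \<longleftrightarrow> adj n p q"
proof -
  have "{p, q} \<notin> EB n" using p q by (auto simp: EB_def doubleton_eq_iff)
  then have "{p, q} \<in> snd (underlying (tclosure (GB n))) \<longleftrightarrow> (p, q) \<in> (AB n)\<^sup>+ \<or> (q, p) \<in> (AB n)\<^sup>+"
    by (auto simp: GB_def underlying_tc doubleton_eq_iff)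
  also have "\<dots> \<longleftrightarrow> adj n p q"
  proof -
    have "sd n p = 0 \<or> sd n p = 1" "sd n q = 0 \<or> sd n q = 1" using dec_lt[OF p] dec_lt[OF q] by auto
    then show ?thesis unfolding AB_TT[OF p q] AB_TT[OF q p] adj_def
      by (elim disjE) auto
  qed
  finally show ?thesis .
qed



lemma KK_ge: "n \<le> KK n" by (cases n) (auto simp: KK_def)

lemma core_ex:
  assumes "3 \<le> n"
  shows "\<forall>p<KK n. \<forall>q<KK n. p \<noteq> q \<longrightarrow> (\<exists>w<KK n. w \<noteq> p \<and> w \<noteq> q \<and> (adj n p w \<noteq> adj n q w))"
proof (intro allI impI)
  fix p q assume p: "p < KK n" and q: "q < KK n" and pq: "p \<noteq> q"
  define S where "S = {w. w < 2*n*n \<and> w \<noteq> p \<and> w \<noteq> q \<and> (adj n p w \<noteq> adj n q w)}"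
  have "n - 2 \<le> card S"
    using core_dist[of p n q] p q pq by (simp add: KK_def S_def)
  then have "0 < card S" using assms by linarith
  then have "S \<noteq> {}" by auto
  then show "\<exists>w<KK n. w \<noteq> p \<and> w \<noteq> q \<and> (adj n p w \<noteq> adj n q w)" by (auto simp: KK_def S_def)
qed

lemma core_D:
  assumes "n = 2*m+2"
  shows "\<forall>p<KK n. \<forall>q<KK n. p \<noteq> q \<longrightarrow> 2*m \<le> card {w. w<KK n \<and> w\<noteq>p \<and> w\<noteq>q \<and> (adj n p w \<noteq> adj n q w)}"
  using core_dist[of _ n] assms by (auto simp: KK_def)

lemma uGA: "underlying (GA n) = (VA n, snd (underlying (GA n)))"
  by (simp add: GA_def underlying_eq)

lemma GA_nd_tc: "nd (underlying (tclosure (GA n))) \<le> 1"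
  unfolding GA_tc by (rule nd_complete) (simp add: VA_def)

lemma GA_cw_tc: "cw (underlying (tclosure (GA n))) \<le> 2"
  unfolding GA_tc by (rule cw_complete) (simp add: VA_def)

lemma gA_inj: "inj_on (\<lambda>p::nat. 2*p) {..<KK n}" by (auto simp: inj_on_def)
lemma gA_V: "(\<lambda>p::nat. 2*p) ` {..<KK n} \<subseteq> VA n" by (auto simp: VA_def)

lemma GA_nd:
  assumes "3 \<le> n"
  shows "KK n \<le> nd (underlying (GA n))"
  apply (subst uGA)
  apply (rule nd_lower[OF _ gA_inj gA_V, where R = "adj n"])
  using GA_T core_ex[OF assms] by (auto simp: VA_def)

lemma GA_cw:
  assumes "2 \<le> m" "n = 2*m+2"
  shows "m \<le> cw (underlying (GA n))"
proof (rule cw_ge)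
  show "\<exists>k e. k_expression k e \<and> cw_verts e = fst (underlying (GA n)) \<and> cw_edges e = snd (underlying (GA n))"
    using mixed_expr(1)[of "VA n" "EA n" "AA n"] mixed_GA[of n] by (simp add: GA_def)
  fix k e assume "k_expression k e" "cw_verts e = fst (underlying (GA n))" "cw_edges e = snd (underlying (GA n))"
  then have ve: "cw_verts e = VA n" by (simp add: GA_def underlying_eq)
  show "m \<le> k"
    by (rule cw_lower_gen[OF \<open>k_expression k e\<close> ve \<open>cw_edges e = snd (underlying (GA n))\<close> gA_inj gA_V, where R = "adj n"])
      (use GA_T core_D[OF assms(2)] KK_ge[of n] assms in auto)
qed

lemma uGB_tc: "underlying (tclosure (GB n)) = (VB n, snd (underlying (tclosure (GB n))))"
  by (simp add: GB_def underlying_tc)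

lemma GB_nd: "1 \<le> n \<Longrightarrow> nd (underlying (GB n)) \<le> 2"
  unfolding GB_u
proof (rule nd_bip)
  assume "1 \<le> n"
  then have "2 \<le> KK n" by (cases n) (auto simp: KK_def)
  then show "2 \<le> card {..<KK n}" by simp
  show "2 \<le> card {KK n..<KK n + 2 * n}" using \<open>1 \<le> n\<close> by simp
qed auto

lemma GB_cw: "cw (underlying (GB n)) \<le> 2"
  unfolding GB_u by (rule cw_bip) auto

lemma gB_inj: "inj_on (\<lambda>p::nat. p) {..<KK n}" by (auto simp: inj_on_def)
lemma gB_V: "(\<lambda>p::nat. p) ` {..<KK n} \<subseteq> VB n" by (auto simp: VB_def)

lemma GB_nd_tc:
  assumes "3 \<le> n"
  shows "KK n \<le> nd (underlying (tclosure (GB n)))"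
  apply (subst uGB_tc)
  apply (rule nd_lower[OF _ gB_inj gB_V, where R = "adj n"])
  using GB_T core_ex[OF assms] by (auto simp: VB_def)

lemma GB_cw_tc:
  assumes "2 \<le> m" "n = 2*m+2"
  shows "m \<le> cw (underlying (tclosure (GB n)))"
proof (rule cw_ge)
  show "\<exists>k e. k_expression k e \<and> cw_verts e = fst (underlying (tclosure (GB n))) \<and> cw_edges e = snd (underlying (tclosure (GB n)))"
    using mixed_expr(2)[of "VB n" "EB n" "AB n"] mixed_GB[of n] by (simp add: GB_def)
  fix k e assume "k_expression k e" "cw_verts e = fst (underlying (tclosure (GB n)))" "cw_edges e = snd (underlying (tclosure (GB n)))"
  then have ve: "cw_verts e = VB n" by (simp add: GB_def underlying_tc)
  show "m \<le> k"
    by (rule cw_lower_gen[OF \<open>k_expression k e\<close> ve \<open>cw_edges e = snd (underlying (tclosure (GB n)))\<close> gB_inj gB_V, where R = "adj n"])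
      (use GB_T core_D[OF assms(2)] KK_ge[of n] assms in auto)
qed

lemma small_f: "x \<le> 2 \<Longrightarrow> (f::nat \<Rightarrow> nat) x \<le> f 0 + f 1 + f (2::nat)"
proof -
  assume "x \<le> 2"
  then have "x = 0 \<or> x = 1 \<or> x = 2" by auto
  then show ?thesis by auto
qed

lemma not_bounds:
  assumes "\<And>c. \<exists>G. mixed_graph G \<and> \<alpha> G \<le> 2 \<and> c < \<beta> G"
  shows "\<not> bounds \<alpha> \<beta>"
proof
  assume "bounds \<alpha> \<beta>"
  then obtain f where f: "\<And>G. mixed_graph G \<Longrightarrow> \<beta> G \<le> f (\<alpha> G)" unfolding bounds_def by blast
  obtain G where G: "mixed_graph G" "\<alpha> G \<le> 2" "f 0 + f 1 + f 2 < \<beta> G" using assms by blast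
  have "\<beta> G \<le> f (\<alpha> G)" using f G(1) by blast
  also have "\<dots> \<le> f 0 + f 1 + f 2" using small_f G(2) by auto
  finally show False using G(3) by simp
qed

theorem mainTheorem19:
  shows "incomparable (\<lambda>G. nd (underlying G)) (\<lambda>G. nd (underlying (tclosure G)))
       \<and> incomparable (\<lambda>G. cw (underlying G)) (\<lambda>G. cw (underlying (tclosure G)))"
  unfolding incomparable_def
proof (intro conjI)
  show "\<not> bounds (\<lambda>G. nd (underlying G)) (\<lambda>G. nd (underlying (tclosure G)))"
  proof (rule not_bounds)
    fix c :: nat
    have "mixed_graph (GB (c+3))" by (rule mixed_GB)
    moreover have "nd (underlying (GB (c+3))) \<le> 2" by (rule GB_nd) simp
    moreover have "c < nd (underlying (tclosure (GB (c+3))))"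
      using GB_nd_tc[of "c+3"] KK_ge[of "c+3"] by simp
    ultimately show "\<exists>G. mixed_graph G \<and> nd (underlying G) \<le> 2 \<and> c < nd (underlying (tclosure G))" by blast
  qed
  show "\<not> bounds (\<lambda>G. nd (underlying (tclosure G))) (\<lambda>G. nd (underlying G))"
  proof (rule not_bounds)
    fix c :: nat
    have "mixed_graph (GA (c+3))" by (rule mixed_GA)
    moreover have "nd (underlying (tclosure (GA (c+3)))) \<le> 2" using GA_nd_tc[of "c+3"] by simp
    moreover have "c < nd (underlying (GA (c+3)))"
      using GA_nd[of "c+3"] KK_ge[of "c+3"] by simp
    ultimately show "\<exists>G. mixed_graph G \<and> nd (underlying (tclosure G)) \<le> 2 \<and> c < nd (underlying G)" by blast
  qed
  show "\<not> bounds (\<lambda>G. cw (underlying G)) (\<lambda>G. cw (underlying (tclosure G)))"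
  proof (rule not_bounds)
    fix c :: nat
    define m where "m = c + 2"
    have "mixed_graph (GB (2*m+2))" by (rule mixed_GB)
    moreover have "cw (underlying (GB (2*m+2))) \<le> 2" by (rule GB_cw)
    moreover have "c < cw (underlying (tclosure (GB (2*m+2))))"
      using GB_cw_tc[of m "2*m+2"] by (simp add: m_def)
    ultimately show "\<exists>G. mixed_graph G \<and> cw (underlying G) \<le> 2 \<and> c < cw (underlying (tclosure G))" by blast
  qed
  show "\<not> bounds (\<lambda>G. cw (underlying (tclosure G))) (\<lambda>G. cw (underlying G))"
  proof (rule not_bounds)
    fix c :: nat
    define m where "m = c + 2"
    have "mixed_graph (GA (2*m+2))" by (rule mixed_GA)
    moreover have "cw (underlying (tclosure (GA (2*m+2)))) \<le> 2" by (rule GA_cw_tc)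
    moreover have "c < cw (underlying (GA (2*m+2)))"
      using GA_cw[of m "2*m+2"] by (simp add: m_def)
    ultimately show "\<exists>G. mixed_graph G \<and> cw (underlying (tclosure G)) \<le> 2 \<and> c < cw (underlying G)" by blast
  qed
qed


end
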